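(* Let $\Phi\in\Lambda$, let $n<N$, and let $\Xi$ be the set of designs $\{(\boldsymbol{x}_i,w_i)\}$ with $0\le w_i\le1/n$ and $\sum_iw_i=1$. Let $\xi=\{(\boldsymbol{x}_i,w_i)\}\in\Xi$ with $\Phi(\xi)<\infty$, and let $\mathcal{X}_1=\{\boldsymbol{x}_i:w_i=0\}$, $\mathcal{X}_3=\{\boldsymbol{x}_i:w_i=1/n\}$, $\mathcal{X}_2=\{\boldsymbol{x}_i:0<w_i<1/n\}$. Assume that if $\mathcal{X}_2\ne\emptyset$ then $F_\Phi(\xi;\boldsymbol{x}_i)=s$ for a common value $s$ for all $\boldsymbol{x}_i\in\mathcal{X}_2$. Let $\boldsymbol{x}_{1*}\in\arg\min_{\boldsymbol{x}_i\in\mathcal{X}_1}F_\Phi(\xi;\boldsymbol{x}_i)$ and $\boldsymbol{x}_{3*}\in\arg\max_{\boldsymbol{x}_i\in\mathcal{X}_3}F_\Phi(\xi;\boldsymbol{x}_i)$ (when the respective sets are nonempty). Suppose there exist $\xi_0\in\Xi$ and $\delta>0$ with $\Phi(\xi)-\Phi(\xi_0)>\delta$. Then: (a) if $\mathcal{X}_2=\emptyset$, then $F_\Phi(\xi;\boldsymbol{x}_{1*})-F_\Phi(\xi;\boldsymbol{x}_{3*})\le-\delta$; (b) if $\mathcal{X}_2\ne\emptyset$ and $\mathcal{X}_1=\emptyset$, then $\mathcal{X}_3\neq\emptyset$ and $F_\Phi(\xi;\boldsymbol{x}_{3*})-s\ge\delta$; (c) if $\mathcal{X}_2\ne\emptyset$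 and $\mathcal{X}_3=\emptyset$, then $\mathcal{X}_1\neq\emptyset$ and $F_\Phi(\xi;\boldsymbol{x}_{1*})-s\le-\delta$; (d) if $\mathcal{X}_1,\mathcal{X}_2,\mathcal{X}_3$ are all nonempty, then $F_\Phi(\xi;\boldsymbol{x}_{1*})-s\le-\delta/2$ or $F_\Phi(\xi;\boldsymbol{x}_{3*})-s\ge\delta/2$.
   Context: Designs $\xi=\{(\boldsymbol{x}_i,w_i)\}$ on $\mathcal{X}=\{\boldsymbol{x}_1,\ldots,\boldsymbol{x}_N\}$, $w_i\ge0$, $\sum w_i=1$; $M(\xi)=\sum_iw_iI_{\boldsymbol\theta}(\boldsymbol{x}_i)$ with symmetric PSD $I_{\boldsymbol\theta}(\boldsymbol{x}_i)$; $\Phi(\xi)$ is a criterion of $M(\xi)$ ($+\infty$ when undefined). $F_\Phi(\xi,\eta)=\lim_{\alpha\downarrow0}[\Phi((1-\alpha)\xi+\alpha\eta)-\Phi(\xi)]/\alpha$; $F_\Phi(\xi;\boldsymbol{x}_i)=F_\Phi(\xi,\delta_{\boldsymbol{x}_i})$ with $\delta_{\boldsymbol{x}_i}$ the one-point design at $\boldsymbol{x}_i$. $\Lambda$: criteria convex in the weights, linearly differentiable ($F_\Phi(\xi,\eta)=\sum_i\lambda_iF_\Phi(\xi;\boldsymbol{x}_i)$ for $\eta=\{(\boldsymbol{x}_i,\lambda_i)\}$ whenever $\Phi(\xi)<\infty$), and infinitely differentiable along line segments of designs. *)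

theory Defs
  imports "HOL-Analysis.Analysis"
begin

text \<open>Design points are indexed by a finite type 'n (so N = CARD('n)); a design is
  its weight vector w :: 'n \<Rightarrow> real.  Criteria take values in ereal (+\<infinity> when undefined).\<close>

definition is_design :: "('n::finite \<Rightarrow> real) \<Rightarrow> bool" where
  "is_design w \<longleftrightarrow> (\<forall>i. 0 \<le> w i) \<and> (\<Sum>i\<in>UNIV. w i) = 1"

definition bounded_design :: "nat \<Rightarrow> ('n::finite \<Rightarrow> real) \<Rightarrow> bool" where
  "bounded_design n w \<longleftrightarrow> is_design w \<and> (\<forall>i. w i \<le> 1 / real n)"

definition point_design :: "'n::finite \<Rightarrow> 'n \<Rightarrow> real" where
  "point_design i = (\<lambda>j. if j = i then 1 else 0)"

definition mix :: "real \<Rightarrow> ('n \<Rightarrow> real) \<Rightarrow> ('n \<Rightarrow> real) \<Rightarrow> ('n \<Rightarrow> real)" where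
  "mix \<alpha> w v = (\<lambda>i. (1 - \<alpha>) * w i + \<alpha> * v i)"

definition criterion_of ::
  "(('n::finite \<Rightarrow> real) \<Rightarrow> ereal) \<Rightarrow> ('n \<Rightarrow> real^'p^'p) \<Rightarrow> (real^'p^'p \<Rightarrow> ereal) \<Rightarrow> bool" where
  "criterion_of Phi I phi \<longleftrightarrow>
     (\<forall>i. transpose (I i) = I i \<and> (\<forall>x. 0 \<le> x \<bullet> (I i *v x))) \<and>
     (\<forall>w. Phi w = phi (\<Sum>i\<in>UNIV. w i *\<^sub>R I i)) \<and>
     (\<forall>w. Phi w \<noteq> -\<infinity>)"

definition has_dir_deriv ::
  "(('n \<Rightarrow> real) \<Rightarrow> ereal) \<Rightarrow> ('n \<Rightarrow> real) \<Rightarrow> ('n \<Rightarrow> real) \<Rightarrow> real \<Rightarrow> bool" where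
  "has_dir_deriv Phi w v d \<longleftrightarrow>
     ((\<lambda>\<alpha>. (Phi (mix \<alpha> w v) - Phi w) / ereal \<alpha>) \<longlongrightarrow> ereal d) (at_right 0)"

definition FPhi :: "(('n \<Rightarrow> real) \<Rightarrow> ereal) \<Rightarrow> ('n \<Rightarrow> real) \<Rightarrow> ('n \<Rightarrow> real) \<Rightarrow> real" where
  "FPhi Phi w v = (THE d. has_dir_deriv Phi w v d)"

definition FPhi_pt :: "(('n::finite \<Rightarrow> real) \<Rightarrow> ereal) \<Rightarrow> ('n \<Rightarrow> real) \<Rightarrow> 'n \<Rightarrow> real" where
  "FPhi_pt Phi w i = FPhi Phi w (point_design i)"

definition in_Lambda :: "(('n::finite \<Rightarrow> real) \<Rightarrow> ereal) \<Rightarrow> bool" where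
  "in_Lambda Phi \<longleftrightarrow>
     \<comment> \<open>convex in the weights\<close>
     (\<forall>w v \<alpha>. is_design w \<and> is_design v \<and> 0 \<le> \<alpha> \<and> \<alpha> \<le> 1 \<longrightarrow>
        Phi (mix \<alpha> w v) \<le> ereal (1 - \<alpha>) * Phi w + ereal \<alpha> * Phi v) \<and>
     \<comment> \<open>linearly differentiable\<close>
     (\<forall>w. is_design w \<and> Phi w < \<infinity> \<longrightarrow>
        (\<forall>i. \<exists>d. has_dir_deriv Phi w (point_design i) d) \<and>
        (\<forall>v. is_design v \<longrightarrow>
           has_dir_deriv Phi w v (\<Sum>i\<in>UNIV. v i * FPhi_pt Phi w i))) \<and>
     \<comment> \<open>infinitely differentiable along line segments of designs\<close>
     (\<forall>w v. is_design w \<and> is_design v \<and> Phi w < \<infinity> \<and> Phi v < \<infinity> \<longrightarrow>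
        (\<exists>D :: nat \<Rightarrow> real \<Rightarrow> real.
           (\<forall>\<alpha>\<in>{0..1}. D 0 \<alpha> = real_of_ereal (Phi (mix \<alpha> w v))) \<and>
           (\<forall>k. \<forall>\<alpha>\<in>{0..1}. (D k has_real_derivative D (Suc k) \<alpha>) (at \<alpha> within {0..1}))))"

end

theory Submission
  imports Defs
begin

lemma comb:
  fixes w w0 F :: "'n::finite \<Rightarrow> real" and n :: nat and s \<delta> :: real and i1 i3 :: 'n
  defines "X1 \<equiv> {i. w i = 0}"
    and "X2 \<equiv> {i. 0 < w i \<and> w i < 1 / real n}"
    and "X3 \<equiv> {i. w i = 1 / real n}"
  assumes xi: "bounded_design n w" and xi0: "bounded_design n w0"
    and common: "X2 \<noteq> {} \<Longrightarrow> \<forall>i\<in>X2. F i = s"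
    and argmin: "X1 \<noteq> {} \<Longrightarrow> i1 \<in> X1 \<and> (\<forall>j\<in>X1. F i1 \<le> F j)"
    and argmax: "X3 \<noteq> {} \<Longrightarrow> i3 \<in> X3 \<and> (\<forall>j\<in>X3. F j \<le> F i3)"
    and dpos: "\<delta> > 0"
    and key: "(\<Sum>i\<in>UNIV. w0 i * F i) - (\<Sum>i\<in>UNIV. w i * F i) < - \<delta>"
  shows "(X2 = {} \<longrightarrow> F i1 - F i3 \<le> - \<delta>)
       \<and> (X2 \<noteq> {} \<and> X1 = {} \<longrightarrow> X3 \<noteq> {} \<and> F i3 - s \<ge> \<delta>)
       \<and> (X2 \<noteq> {} \<and> X3 = {} \<longrightarrow> X1 \<noteq> {} \<and> F i1 - s \<le> - \<delta>)
       \<and> (X1 \<noteq> {} \<and> X2 \<noteq> {} \<and> X3 \<noteq> {} \<longrightarrow>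
            F i1 - s \<le> - \<delta> / 2 \<or> F i3 - s \<ge> \<delta> / 2)"
proof -
  have w0: "\<And>i. 0 \<le> w i" "\<And>i. w i \<le> 1 / real n" "(\<Sum>i\<in>UNIV. w i) = 1"
    using xi by (auto simp: bounded_design_def is_design_def)
  have v0: "\<And>i. 0 \<le> w0 i" "\<And>i. w0 i \<le> 1 / real n" "(\<Sum>i\<in>UNIV. w0 i) = 1"
    using xi0 by (auto simp: bounded_design_def is_design_def)
  have npos: "1 / real n > 0"
  proof (rule ccontr)
    assume "\<not> 1 / real n > 0"
    then have "w i = 0" for i using w0(1)[of i] w0(2)[of i] by linarith
    then show False using w0(3) by simp
  qed
  define d where "d i = w0 i - w i" for i
  have sd: "(\<Sum>i\<in>UNIV. d i) = 0" using w0(3) v0(3) by (simp add: d_def sum_subtractf)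
  have keyd: "(\<Sum>i\<in>UNIV. d i * F i) < - \<delta>"
    using key by (simp add: d_def left_diff_distrib sum_subtractf)
  have U: "UNIV = X1 \<union> X2 \<union> X3"
  proof -
    have "w i = 0 \<or> (0 < w i \<and> w i < 1 / real n) \<or> w i = 1 / real n" for i
      using w0(1)[of i] w0(2)[of i] by linarith
    then show ?thesis by (auto simp: X1_def X2_def X3_def)
  qed
  have D12: "X1 \<inter> X2 = {}" "X1 \<inter> X3 = {}" "X2 \<inter> X3 = {}" using npos
    by (auto simp: X1_def X2_def X3_def)
  have split: "(\<Sum>i\<in>UNIV. g i) = sum g X1 + sum g X2 + sum g X3" for g :: "'n \<Rightarrow> real"
  proof -
    have "sum g (X1 \<union> X2 \<union> X3) = sum g (X1 \<union> X2) + sum g X3"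
      by (rule sum.union_disjoint) (use D12 in auto)
    also have "sum g (X1 \<union> X2) = sum g X1 + sum g X2"
      by (rule sum.union_disjoint) (use D12 in auto)
    finally show ?thesis using U by simp
  qed
  define P where "P = sum d X1"
  define R where "R = - sum d X3"
  have P01: "0 \<le> P" "P \<le> 1"
  proof -
    have "P = sum w0 X1" by (simp add: P_def d_def X1_def)
    moreover have "sum w0 X1 \<le> sum w0 UNIV" by (rule sum_mono2) (auto simp: v0)
    ultimately show "0 \<le> P" "P \<le> 1" using v0 by (auto intro: sum_nonneg)
  qed
  have R01: "0 \<le> R" "R \<le> 1"
  proof -
    have "R = sum (\<lambda>i. w i - w0 i) X3" by (simp add: R_def d_def sum_negf[symmetric])
    moreover have "sum (\<lambda>i. w i - w0 i) X3 \<ge> 0" by (rule sum_nonneg) (auto simp: X3_def v0)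
    moreover have "sum (\<lambda>i. w i - w0 i) X3 \<le> sum w X3" by (rule sum_mono) (auto simp: v0)
    moreover have "sum w X3 \<le> sum w UNIV" by (rule sum_mono2) (auto simp: w0)
    ultimately show "0 \<le> R" "R \<le> 1" using w0 by auto
  qed
  have gen: "(\<Sum>i\<in>UNIV. d i * F i) \<ge> (F i1 - c) * P - (F i3 - c) * R"
    if c2: "\<forall>i\<in>X2. F i = c" for c
  proof -
    have "(\<Sum>i\<in>UNIV. d i * F i) = (\<Sum>i\<in>UNIV. d i * (F i - c))"
      using sd by (simp add: right_diff_distrib sum_subtractf sum_distrib_right[symmetric])
    also have "\<dots> = (\<Sum>i\<in>X1. d i * (F i - c)) + (\<Sum>i\<in>X2. d i * (F i - c)) + (\<Sum>i\<in>X3. d i * (F i - c))"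
      by (rule split)
    also have "(\<Sum>i\<in>X2. d i * (F i - c)) = 0" using c2 by simp
    finally have e: "(\<Sum>i\<in>UNIV. d i * F i) = (\<Sum>i\<in>X1. d i * (F i - c)) + (\<Sum>i\<in>X3. d i * (F i - c))" by simp
    have a1: "(\<Sum>i\<in>X1. d i * (F i - c)) \<ge> (F i1 - c) * P"
    proof (cases "X1 = {}")
      case True then show ?thesis by (simp add: P_def)
    next
      case False
      have "(\<Sum>i\<in>X1. d i * (F i1 - c)) = sum d X1 * (F i1 - c)" by (rule sum_distrib_right[symmetric])
      then have "(F i1 - c) * P = (\<Sum>i\<in>X1. d i * (F i1 - c))" by (simp add: P_def)
      also have "\<dots> \<le> (\<Sum>i\<in>X1. d i * (F i - c))"
      proof (rule sum_mono)
        fix i assume "i \<in> X1"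
        then have "d i \<ge> 0" "F i1 \<le> F i" using argmin False v0 by (auto simp: d_def X1_def)
        then show "d i * (F i1 - c) \<le> d i * (F i - c)" by (simp add: mult_left_mono)
      qed
      finally show ?thesis .
    qed
    have a3: "(\<Sum>i\<in>X3. d i * (F i - c)) \<ge> - (F i3 - c) * R"
    proof (cases "X3 = {}")
      case True then show ?thesis by (simp add: R_def)
    next
      case False
      have "(\<Sum>i\<in>X3. d i * (F i3 - c)) = sum d X3 * (F i3 - c)" by (rule sum_distrib_right[symmetric])
      then have "- (F i3 - c) * R = (\<Sum>i\<in>X3. d i * (F i3 - c))" by (simp add: R_def algebra_simps)
      also have "\<dots> \<le> (\<Sum>i\<in>X3. d i * (F i - c))"
      proof (rule sum_mono)
        fix i assume "i \<in> X3"
        then have "d i \<le> 0" "F i \<le> F i3" using argmax False v0 by (auto simp: d_def X3_def)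
        then show "d i * (F i3 - c) \<le> d i * (F i - c)" by (simp add: mult_left_mono_neg)
      qed
      finally show ?thesis .
    qed
    show ?thesis using e a1 a3 by (simp add: algebra_simps)
  qed
  have hl: "x * y \<ge> min x 0" "x * y \<le> max x 0" if "0 \<le> y" "y \<le> 1" for x y :: real
  proof -
    show "x * y \<ge> min x 0"
    proof (cases "x \<ge> 0")
      case True then show ?thesis using that by simp
    next
      case False then have "x * 1 \<le> x * y" using that by (intro mult_left_mono_neg) auto
      then show ?thesis by simp
    qed
    show "x * y \<le> max x 0"
    proof (cases "x \<ge> 0")
      case True then have "x * y \<le> x * 1" using that by (intro mult_left_mono) auto
      then show ?thesis by simp
    next
      case False then show ?thesis using that by (simp add: mult_nonpos_nonneg)
    qed
  qed
  have hP: "(F i1 - c) * P \<ge> min (F i1 - c) 0" for c using hl P01 by blast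
  have hR: "(F i3 - c) * R \<le> max (F i3 - c) 0" for c using hl R01 by blast
  have a: "X2 = {} \<longrightarrow> F i1 - F i3 \<le> - \<delta>"
  proof
    assume "X2 = {}"
    then have "(\<Sum>i\<in>UNIV. d i * F i) \<ge> (F i1 - F i3) * P - (F i3 - F i3) * R" by (intro gen) auto
    then show "F i1 - F i3 \<le> - \<delta>" using hP[of "F i3"] keyd dpos by (auto simp: min_def split: if_splits)
  qed
  have b: "X2 \<noteq> {} \<and> X1 = {} \<longrightarrow> X3 \<noteq> {} \<and> F i3 - s \<ge> \<delta>"
  proof
    assume h: "X2 \<noteq> {} \<and> X1 = {}"
    then have "(\<Sum>i\<in>UNIV. d i * F i) \<ge> (F i1 - s) * P - (F i3 - s) * R" using common by (intro gen) auto
    moreover have "P = 0" using h by (simp add: P_def)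
    ultimately have "(F i3 - s) * R > \<delta>" using keyd by simp
    moreover have "X3 = {} \<Longrightarrow> R = 0" by (simp add: R_def)
    ultimately show "X3 \<noteq> {} \<and> F i3 - s \<ge> \<delta>" using hR[of s] dpos by (auto simp: max_def split: if_splits)
  qed
  have c: "X2 \<noteq> {} \<and> X3 = {} \<longrightarrow> X1 \<noteq> {} \<and> F i1 - s \<le> - \<delta>"
  proof
    assume h: "X2 \<noteq> {} \<and> X3 = {}"
    then have "(\<Sum>i\<in>UNIV. d i * F i) \<ge> (F i1 - s) * P - (F i3 - s) * R" using common by (intro gen) auto
    moreover have "R = 0" using h by (simp add: R_def)
    ultimately have "(F i1 - s) * P < - \<delta>" using keyd by simp
    moreover have "X1 = {} \<Longrightarrow> P = 0" by (simp add: P_def)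
    ultimately show "X1 \<noteq> {} \<and> F i1 - s \<le> - \<delta>" using hP[of s] dpos by (auto simp: min_def split: if_splits)
  qed
  have dd: "X1 \<noteq> {} \<and> X2 \<noteq> {} \<and> X3 \<noteq> {} \<longrightarrow>
            F i1 - s \<le> - \<delta> / 2 \<or> F i3 - s \<ge> \<delta> / 2"
  proof
    assume h: "X1 \<noteq> {} \<and> X2 \<noteq> {} \<and> X3 \<noteq> {}"
    then have "(\<Sum>i\<in>UNIV. d i * F i) \<ge> (F i1 - s) * P - (F i3 - s) * R" using common by (intro gen) auto
    then show "F i1 - s \<le> - \<delta> / 2 \<or> F i3 - s \<ge> \<delta> / 2"
    proof -
      have lin: "\<And>a b A B :: real. A \<ge> min a 0 \<Longrightarrow> B \<le> max b 0 \<Longrightarrow> A - B < -\<delta> \<Longrightarrow> a \<le> -\<delta>/2 \<or> b \<ge> \<delta>/2"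
        using dpos by (auto simp: min_def max_def split: if_splits)
      show ?thesis by (rule lin[OF hP[of s] hR[of s]]) (use keyd \<open>(F i1 - s) * P - (F i3 - s) * R \<le> _\<close> in linarith)
    qed
  qed
  show ?thesis using a b c dd by blast
qed

theorem lemma2:
  fixes Phi :: "('n::finite \<Rightarrow> real) \<Rightarrow> ereal"
    and I :: "'n \<Rightarrow> real^'p^'p" and phi :: "real^'p^'p \<Rightarrow> ereal"
    and n :: nat and w w0 :: "'n \<Rightarrow> real" and s \<delta> :: real and i1 i3 :: 'n
  defines "X1 \<equiv> {i. w i = 0}"
    and "X2 \<equiv> {i. 0 < w i \<and> w i < 1 / real n}"
    and "X3 \<equiv> {i. w i = 1 / real n}"
  assumes crit: "criterion_of Phi I phi"
    and Lam: "in_Lambda Phi"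
    and nN: "n < CARD('n)"
    and xi: "bounded_design n w"
    and fin: "Phi w < \<infinity>"
    and common: "X2 \<noteq> {} \<Longrightarrow> \<forall>i\<in>X2. FPhi_pt Phi w i = s"
    and argmin: "X1 \<noteq> {} \<Longrightarrow> i1 \<in> X1 \<and> (\<forall>j\<in>X1. FPhi_pt Phi w i1 \<le> FPhi_pt Phi w j)"
    and argmax: "X3 \<noteq> {} \<Longrightarrow> i3 \<in> X3 \<and> (\<forall>j\<in>X3. FPhi_pt Phi w j \<le> FPhi_pt Phi w i3)"
    and xi0: "bounded_design n w0"
    and dpos: "\<delta> > 0"
    and gap: "Phi w - Phi w0 > ereal \<delta>"
  shows "(X2 = {} \<longrightarrow> FPhi_pt Phi w i1 - FPhi_pt Phi w i3 \<le> - \<delta>)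
       \<and> (X2 \<noteq> {} \<and> X1 = {} \<longrightarrow> X3 \<noteq> {} \<and> FPhi_pt Phi w i3 - s \<ge> \<delta>)
       \<and> (X2 \<noteq> {} \<and> X3 = {} \<longrightarrow> X1 \<noteq> {} \<and> FPhi_pt Phi w i1 - s \<le> - \<delta>)
       \<and> (X1 \<noteq> {} \<and> X2 \<noteq> {} \<and> X3 \<noteq> {} \<longrightarrow>
            FPhi_pt Phi w i1 - s \<le> - \<delta> / 2 \<or> FPhi_pt Phi w i3 - s \<ge> \<delta> / 2)"
proof -
  have dw: "is_design w" and dw0: "is_design w0" using xi xi0 by (auto simp: bounded_design_def)
  have ninf: "\<And>v. Phi v \<noteq> -\<infinity>" using crit unfolding criterion_of_def by blast
  obtain a where a: "Phi w = ereal a" using fin ninf[of w] by (cases "Phi w") auto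
  have "Phi w0 \<noteq> \<infinity>" using gap a by auto
  then obtain b where b: "Phi w0 = ereal b" using ninf[of w0] by (cases "Phi w0") auto
  have gapr: "a - b > \<delta>" using gap a b by simp
  have L2: "\<And>v. is_design v \<Longrightarrow> has_dir_deriv Phi w v (\<Sum>i\<in>UNIV. v i * FPhi_pt Phi w i)"
    using Lam dw fin by (simp add: in_Lambda_def)
  have conv: "\<And>\<alpha>. 0 \<le> \<alpha> \<Longrightarrow> \<alpha> \<le> 1 \<Longrightarrow> Phi (mix \<alpha> w w0) \<le> ereal (1 - \<alpha>) * Phi w + ereal \<alpha> * Phi w0"
    using Lam dw dw0 by (simp add: in_Lambda_def)
  have z: "(\<Sum>i\<in>UNIV. w i * FPhi_pt Phi w i) = 0"
  proof -
    have h: "((\<lambda>\<alpha>. (Phi (mix \<alpha> w w) - Phi w) / ereal \<alpha>) \<longlongrightarrow> ereal (\<Sum>i\<in>UNIV. w i * FPhi_pt Phi w i)) (at_right 0)"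
      using L2[OF dw] by (simp add: has_dir_deriv_def)
    have m: "mix \<alpha> w w = w" for \<alpha> by (rule ext) (simp add: mix_def algebra_simps)
    have "(\<lambda>\<alpha>. (Phi (mix \<alpha> w w) - Phi w) / ereal \<alpha>) = (\<lambda>\<alpha>. 0)"
      by (rule ext) (simp add: m a)
    with h have "((\<lambda>\<alpha>. 0) \<longlongrightarrow> ereal (\<Sum>i\<in>UNIV. w i * FPhi_pt Phi w i)) (at_right (0::real))" by simp
    then have "ereal (\<Sum>i\<in>UNIV. w i * FPhi_pt Phi w i) = 0"
      using tendsto_unique[OF trivial_limit_at_right_real _ tendsto_const] by blast
    then show ?thesis by (simp add: zero_ereal_def)
  qed
  have le: "(\<Sum>i\<in>UNIV. w0 i * FPhi_pt Phi w i) \<le> b - a"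
  proof -
    have h: "((\<lambda>\<alpha>. (Phi (mix \<alpha> w w0) - Phi w) / ereal \<alpha>) \<longlongrightarrow> ereal (\<Sum>i\<in>UNIV. w0 i * FPhi_pt Phi w i)) (at_right 0)"
      using L2[OF dw0] by (simp add: has_dir_deriv_def)
    have ev: "eventually (\<lambda>\<alpha>. (Phi (mix \<alpha> w w0) - Phi w) / ereal \<alpha> \<le> ereal (b - a)) (at_right (0::real))"
    proof (rule eventually_at_rightI[of 0 1])
      fix \<alpha> :: real assume "\<alpha> \<in> {0<..<1}"
      then have al: "0 < \<alpha>" "\<alpha> < 1" by auto
      obtain m where m: "Phi (mix \<alpha> w w0) = ereal m" using ninf conv[of \<alpha>] al a b
        by (cases "Phi (mix \<alpha> w w0)") auto
      have "ereal m \<le> ereal ((1 - \<alpha>) * a + \<alpha> * b)" using conv[of \<alpha>] al a b m by simp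
      then have "m - a \<le> (b - a) * \<alpha>" by (simp add: algebra_simps)
      then have "(m - a) / \<alpha> \<le> b - a" using al by (simp add: pos_divide_le_eq)
      then show "(Phi (mix \<alpha> w w0) - Phi w) / ereal \<alpha> \<le> ereal (b - a)"
        using al by (simp add: m a ereal_divide)
    qed simp
    have "ereal (\<Sum>i\<in>UNIV. w0 i * FPhi_pt Phi w i) \<le> ereal (b - a)"
      by (rule tendsto_le[OF trivial_limit_at_right_real tendsto_const h ev])
    then show ?thesis by simp
  qed
  have key: "(\<Sum>i\<in>UNIV. w0 i * FPhi_pt Phi w i) - (\<Sum>i\<in>UNIV. w i * FPhi_pt Phi w i) < - \<delta>"
    using z le gapr by simp
  show ?thesis unfolding X1_def X2_def X3_def
    by (rule comb[OF xi xi0 _ _ _ dpos key]) (use common argmin argmax in \<open>auto simp: X1_def X2_def X3_def\<close>)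
qed

end
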